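(* Let $\Omega\subset\mathbb{R}^d$ ($d\ge2$) be compact, let $X_1,X_2,\ldots$ be i.i.d. in $\Omega$ with density $\varphi_P$, and $Y_1,Y_2,\ldots$ i.i.d. in $\Omega$ with density $\varphi_D$, all independent. For each $n$ let $l_M(Q_n)=\frac1n\min_{\sigma\in\Pi_n}\sum_{i=1}^n\|X_{\sigma(i)}-Y_i\|$. Then for every finite partition $\mathcal{C}=\{C^1,\ldots,C^{|\mathcal{C}|}\}$ of $\Omega$ into measurable cells, $$\liminf_{n\to\infty}l_M(Q_n)\ge \underline{l}(\mathcal{C})\quad\text{almost surely},$$ where $\underline{l}(\mathcal{C})$ is the optimal value of the linear program: minimize $\sum_{i,j}\alpha_{ij}\inf_{y\in C^i,x\in C^j}\|x-y\|$ over $\alpha_{ij}\ge 0$ subject to $\sum_j\alpha_{ij}=\varphi_D(C^i)$ for all $i$ and $\sum_i\alpha_{ij}=\varphi_P(C^j)$ for all $j$.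
   Context: $\Pi_n$ is the set of permutations of $\{1,\ldots,n\}$; $\|\cdot\|$ is the Euclidean norm. For a cell $C$, $\varphi_P(C)=\int_C\varphi_P(x)\,dx$ and $\varphi_D(C)=\int_C\varphi_D(y)\,dy$. The densities are densities of absolutely continuous distributions. *)

theory Defs
  imports "HOL-Probability.Probability"
begin

text \<open>Matching cost of the sample: (1/n) min over permutations sigma of {0..n-1}
  of the sum of ||X (sigma i) - Y i|| (0-based indexing of the samples).\<close>
definition matching_cost :: "(nat \<Rightarrow> 'a::real_normed_vector) \<Rightarrow> (nat \<Rightarrow> 'a) \<Rightarrow> nat \<Rightarrow> real" where
  "matching_cost x y n =
     (1 / real n) * Min {(\<Sum>i<n. norm (x (\<sigma> i) - y i)) | \<sigma>. \<sigma> permutes {..<n}}"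

definition cell_dist :: "'a::real_normed_vector set \<Rightarrow> 'a set \<Rightarrow> real" where
  "cell_dist A B = Inf {norm (x - y) | x y. y \<in> A \<and> x \<in> B}"

definition cell_mass :: "('a::euclidean_space \<Rightarrow> real) \<Rightarrow> 'a set \<Rightarrow> real" where
  "cell_mass \<phi> C = (LINT x:C|lborel. \<phi> x)"

definition lp_lower :: "nat \<Rightarrow> (nat \<Rightarrow> 'a::euclidean_space set) \<Rightarrow> ('a \<Rightarrow> real) \<Rightarrow> ('a \<Rightarrow> real) \<Rightarrow> real" where
  "lp_lower K C \<phi>P \<phi>D = Inf {(\<Sum>i<K. \<Sum>j<K. \<alpha> i j * cell_dist (C i) (C j)) | \<alpha>.
      (\<forall>i<K. \<forall>j<K. \<alpha> i j \<ge> 0) \<and>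
      (\<forall>i<K. (\<Sum>j<K. \<alpha> i j) = cell_mass \<phi>D (C i)) \<and>
      (\<forall>j<K. (\<Sum>i<K. \<alpha> i j) = cell_mass \<phi>P (C j))}"

end

theory Submission
  imports Defs
begin


lemma subseq_finite:
  fixes f :: "'i \<Rightarrow> nat \<Rightarrow> real"
  assumes "finite S" "\<And>s n. s \<in> S \<Longrightarrow> \<bar>f s n\<bar> \<le> B"
  shows "\<exists>r. strict_mono r \<and> (\<forall>s\<in>S. convergent (\<lambda>n. f s (r n)))"
  using assms
proof (induction S rule: finite_induct)
  case empty
  then show ?case by (intro exI[of _ id]) (auto simp: strict_mono_def)
next
  case (insert s S)
  then obtain r where r: "strict_mono r" "\<forall>s\<in>S. convergent (\<lambda>n. f s (r n))" by auto
  obtain q :: "nat \<Rightarrow> nat" where q: "strict_mono q" "monoseq (\<lambda>n. f s (r (q n)))"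
    using seq_monosub[of "\<lambda>n. f s (r n)"] by blast
  have "Bseq (\<lambda>n. f s (r (q n)))"
    by (rule BseqI'[of _ B]) (use insert.prems in auto)
  with q have c: "convergent (\<lambda>n. f s (r (q n)))" using Bseq_monoseq_convergent by blast
  have "\<forall>s'\<in>S. convergent (\<lambda>n. f s' (r (q n)))"
    using convergent_subseq_convergent[OF _ q(1)] r(2) by (auto simp: comp_def)
  moreover have "strict_mono (r \<circ> q)" using r(1) q(1) by (rule strict_mono_o)
  ultimately show ?case using c by (intro exI[of _ "r \<circ> q"]) (auto simp: comp_def)
qed

lemma sum_ind_one:
  fixes K :: nat
  assumes disj: "\<And>k l. k < K \<Longrightarrow> l < K \<Longrightarrow> k \<noteq> l \<Longrightarrow> C k \<inter> C l = {}"
    and z: "z \<in> (\<Union>k<K. C k)"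
  shows "(\<Sum>k<K. indicator (C k) z :: real) = 1"
proof -
  obtain j where j: "j < K" "z \<in> C j" using z by auto
  have "disjoint_family_on C {..<K}" using disj by (auto simp: disjoint_family_on_def)
  from sum_indicator_disjoint_family[OF this j(2) finite_lessThan[of K], of "\<lambda>_. 1::real"] j(1)
  show ?thesis by simp
qed

lemma cell_dist_le:
  assumes "y \<in> A" "x \<in> B"
  shows "cell_dist A B \<le> norm (x - y)"
  unfolding cell_dist_def
  by (rule cInf_lower) (use assms in \<open>auto intro!: bdd_belowI[of _ 0]\<close>)

lemma cell_dist_nonneg:
  assumes "A \<noteq> {}" "B \<noteq> {}"
  shows "cell_dist A B \<ge> 0"
  unfolding cell_dist_def
  by (rule cInf_greatest) (use assms in auto)

lemma cost_repr:
  assumes "n > 0"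
  shows "\<exists>\<sigma>. \<sigma> permutes {..<n} \<and>
           matching_cost x y n = (\<Sum>i<n. norm (x (\<sigma> i) - y i)) / real n"
proof -
  let ?S = "{(\<Sum>i<n. norm (x (\<sigma> i) - y i)) | \<sigma>. \<sigma> permutes {..<n}}"
  have "?S = (\<lambda>\<sigma>. \<Sum>i<n. norm (x (\<sigma> i) - y i)) ` {\<sigma>. \<sigma> permutes {..<n}}" by auto
  hence fin: "finite ?S" using finite_permutations[of "{..<n}"] by simp
  have ne: "?S \<noteq> {}" using permutes_id[of "{..<n}"] by blast
  from Min_in[OF fin ne] obtain \<sigma> where "\<sigma> permutes {..<n}"
    "Min ?S = (\<Sum>i<n. norm (x (\<sigma> i) - y i))" by auto
  then show ?thesis unfolding matching_cost_def by (intro exI[of _ \<sigma>]) auto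
qed


lemma det_main:
  fixes x y :: "nat \<Rightarrow> 'a::real_normed_vector" and C :: "nat \<Rightarrow> 'a set"
  assumes Cne: "\<And>k. k < K \<Longrightarrow> C k \<noteq> {}"
    and disj: "\<And>k l. k < K \<Longrightarrow> l < K \<Longrightarrow> k \<noteq> l \<Longrightarrow> C k \<inter> C l = {}"
    and xin: "\<And>i. x i \<in> (\<Union>k<K. C k)" and yin: "\<And>i. y i \<in> (\<Union>k<K. C k)"
    and fx: "\<And>j. j < K \<Longrightarrow> (\<lambda>n. (\<Sum>i<n. indicator (C j) (x i) :: real) / real n) \<longlonglongrightarrow> pP j"
    and fy: "\<And>j. j < K \<Longrightarrow> (\<lambda>n. (\<Sum>i<n. indicator (C j) (y i) :: real) / real n) \<longlonglongrightarrow> pD j"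
  shows "ereal (Inf {(\<Sum>i<K. \<Sum>j<K. \<alpha> i j * cell_dist (C i) (C j)) | \<alpha>.
      (\<forall>i<K. \<forall>j<K. \<alpha> i j \<ge> 0) \<and>
      (\<forall>i<K. (\<Sum>j<K. \<alpha> i j) = pD i) \<and>
      (\<forall>j<K. (\<Sum>i<K. \<alpha> i j) = pP j)}) \<le> liminf (\<lambda>n. ereal (matching_cost x y n))"
proof -
  define SS where "SS = {(\<Sum>i<K. \<Sum>j<K. \<alpha> i j * cell_dist (C i) (C j)) | \<alpha>.
      (\<forall>i<K. \<forall>j<K. \<alpha> i j \<ge> 0) \<and>
      (\<forall>i<K. (\<Sum>j<K. \<alpha> i j) = pD i) \<and>
      (\<forall>j<K. (\<Sum>i<K. \<alpha> i j) = pP j)}"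
  define L where "L = Inf SS"
  define c where "c n = matching_cost x y n" for n
  define \<sigma> where "\<sigma> n = (SOME \<sigma>. \<sigma> permutes {..<n} \<and>
           matching_cost x y n = (\<Sum>i<n. norm (x (\<sigma> i) - y i)) / real n)" for n
  have \<sigma>: "\<sigma> n permutes {..<n} \<and> c n = (\<Sum>i<n. norm (x (\<sigma> n i) - y i)) / real n"
    if "n > 0" for n
    using someI_ex[OF cost_repr[OF that, of x y]] unfolding \<sigma>_def c_def by simp
  define \<alpha> where "\<alpha> n a b = (\<Sum>i<n. indicator (C a) (y i) * indicator (C b) (x (\<sigma> n i))) / real n"
    for n a b :: nat
  have one_y: "(\<Sum>a<K. indicator (C a) (y i) :: real) = 1" for i
    using sum_ind_one[OF disj yin] by blast
  have one_x: "(\<Sum>b<K. indicator (C b) (x i) :: real) = 1" for i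
    using sum_ind_one[OF disj xin] by blast
  have F1: "(\<Sum>a<K. \<Sum>b<K. \<alpha> n a b * cell_dist (C a) (C b)) \<le> c n" if "n > 0" for n
  proof -
    define f where "f i a b = indicator (C a) (y i) * indicator (C b) (x (\<sigma> n i)) * cell_dist (C a) (C b)"
      for i a b
    have e1: "\<alpha> n a b * cell_dist (C a) (C b) = (\<Sum>i<n. f i a b) / real n" for a b
      unfolding \<alpha>_def f_def by (simp only: times_divide_eq_left sum_distrib_right)
    have "(\<Sum>a<K. \<Sum>b<K. \<alpha> n a b * cell_dist (C a) (C b)) = (\<Sum>a<K. \<Sum>b<K. \<Sum>i<n. f i a b) / real n"
      unfolding e1 by (simp add: sum_divide_distrib)
    also have "(\<Sum>a<K. \<Sum>b<K. \<Sum>i<n. f i a b) = (\<Sum>a<K. \<Sum>i<n. \<Sum>b<K. f i a b)"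
      by (rule sum.cong[OF refl]) (rule sum.swap)
    also have "\<dots> = (\<Sum>i<n. \<Sum>a<K. \<Sum>b<K. f i a b)"
      by (rule sum.swap)
    also have "\<dots> \<le> (\<Sum>i<n. norm (x (\<sigma> n i) - y i))"
    proof (rule sum_mono)
      fix i
      have "(\<Sum>a<K. \<Sum>b<K. f i a b) \<le> (\<Sum>a<K. \<Sum>b<K. indicator (C a) (y i) * indicator (C b) (x (\<sigma> n i)) * norm (x (\<sigma> n i) - y i))"
        unfolding f_def by (intro sum_mono) (auto simp: indicator_def intro: cell_dist_le)
      also have "\<dots> = norm (x (\<sigma> n i) - y i) * (\<Sum>a<K. \<Sum>b<K. indicator (C a) (y i) * indicator (C b) (x (\<sigma> n i)))"
        by (simp only: sum_distrib_left mult_ac)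
      also have "\<dots> = norm (x (\<sigma> n i) - y i) * ((\<Sum>a<K. indicator (C a) (y i)) * (\<Sum>b<K. indicator (C b) (x (\<sigma> n i))))"
        by (simp only: sum_product)
      also have "\<dots> = norm (x (\<sigma> n i) - y i)" using one_x one_y by simp
      finally show "(\<Sum>a<K. \<Sum>b<K. f i a b) \<le> norm (x (\<sigma> n i) - y i)" .
    qed
    finally show ?thesis using \<sigma>[OF that] that by (simp add: divide_right_mono)
  qed
  have F2: "(\<Sum>b<K. \<alpha> n a b) = (\<Sum>i<n. indicator (C a) (y i)) / real n" for n a
  proof -
    have "(\<Sum>b<K. \<alpha> n a b) = (\<Sum>b<K. \<Sum>i<n. indicator (C a) (y i) * indicator (C b) (x (\<sigma> n i))) / real n"
      unfolding \<alpha>_def by (simp add: sum_divide_distrib)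
    also have "(\<Sum>b<K. \<Sum>i<n. indicator (C a) (y i) * indicator (C b) (x (\<sigma> n i)) :: real)
       = (\<Sum>i<n. indicator (C a) (y i) * (\<Sum>b<K. indicator (C b) (x (\<sigma> n i))))"
      by (subst sum.swap) (simp only: sum_distrib_left)
    also have "\<dots> = (\<Sum>i<n. indicator (C a) (y i))" using one_x by simp
    finally show ?thesis .
  qed
  have F3: "(\<Sum>a<K. \<alpha> n a b) = (\<Sum>i<n. indicator (C b) (x i)) / real n" if "n > 0" for n b
  proof -
    have "(\<Sum>a<K. \<alpha> n a b) = (\<Sum>a<K. \<Sum>i<n. indicator (C a) (y i) * indicator (C b) (x (\<sigma> n i))) / real n"
      unfolding \<alpha>_def by (simp add: sum_divide_distrib)
    also have "(\<Sum>a<K. \<Sum>i<n. indicator (C a) (y i) * indicator (C b) (x (\<sigma> n i)) :: real)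
       = (\<Sum>i<n. (\<Sum>a<K. indicator (C a) (y i)) * indicator (C b) (x (\<sigma> n i)))"
      by (subst sum.swap) (simp only: sum_distrib_right)
    also have "\<dots> = (\<Sum>i<n. indicator (C b) (x (\<sigma> n i)))" using one_y by simp
    also have "\<dots> = (\<Sum>i<n. indicator (C b) (x i))"
      using sum.permute[OF \<sigma>[OF that, THEN conjunct1], of "\<lambda>i. indicator (C b) (x i) :: real"]
      by (simp add: comp_def)
    finally show ?thesis .
  qed
  have F4: "0 \<le> \<alpha> n a b \<and> \<alpha> n a b \<le> 1" for n a b
  proof -
    have "(\<Sum>i<n. indicator (C a) (y i) * indicator (C b) (x (\<sigma> n i)) :: real) \<le> (\<Sum>i<n. 1)"
      by (intro sum_mono) (auto simp: indicator_def)
    moreover have "0 \<le> (\<Sum>i<n. indicator (C a) (y i) * indicator (C b) (x (\<sigma> n i)) :: real)"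
      by (intro sum_nonneg) auto
    ultimately show ?thesis unfolding \<alpha>_def by (cases "n = 0") auto
  qed
  have bdd: "bdd_below SS"
    unfolding SS_def
    by (rule bdd_belowI[of _ 0])
       (auto intro!: sum_nonneg mult_nonneg_nonneg cell_dist_nonneg Cne)
  have "ereal L \<le> liminf (\<lambda>n. ereal (c n))"
    unfolding le_Liminf_iff
  proof (intro allI impI)
    fix z assume z: "z < ereal L"
    show "eventually (\<lambda>n. z < ereal (c n)) sequentially"
    proof (rule ccontr)
      assume ne: "\<not> eventually (\<lambda>n. z < ereal (c n)) sequentially"
      hence freq: "\<forall>N. \<exists>n\<ge>N. ereal (c n) \<le> z"
        unfolding eventually_sequentially by (auto simp: not_less)
      obtain r where zr: "z = ereal r"
      proof (cases z)
        case (real r) then show ?thesis using that by blast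
      next
        case PInf then show ?thesis using z by simp
      next
        case MInf then show ?thesis using freq by auto
      qed
      have rL: "r < L" using z zr by simp
      have "infinite {n. 0 < n \<and> c n \<le> r}"
        unfolding infinite_nat_iff_unbounded_le
      proof
        fix m
        obtain n where "n \<ge> Suc m" "ereal (c n) \<le> z" using freq by blast
        thus "\<exists>n\<ge>m. n \<in> {n. 0 < n \<and> c n \<le> r}" using zr by (intro exI[of _ n]) auto
      qed
      from infinite_enumerate[OF this] obtain s :: "nat \<Rightarrow> nat" where
        s0: "strict_mono s" "\<forall>k. s k \<in> {n. 0 < n \<and> c n \<le> r}" by blast
      hence s: "strict_mono s" "\<And>k. 0 < s k \<and> c (s k) \<le> r" by auto
      obtain q :: "nat \<Rightarrow> nat" where q: "strict_mono q"
        "\<forall>p\<in>{..<K}\<times>{..<K}. convergent (\<lambda>k. \<alpha> (s (q k)) (fst p) (snd p))"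
        using subseq_finite[of "{..<K}\<times>{..<K}" "\<lambda>p k. \<alpha> (s k) (fst p) (snd p)" 1] F4
        by (auto simp: abs_le_iff)
      define t where "t = s \<circ> q"
      have t: "strict_mono t" unfolding t_def using s(1) q(1) by (rule strict_mono_o)
      have tpos: "0 < t k" "c (t k) \<le> r" for k using s(2)[of "q k"] by (auto simp: t_def)
      define \<beta> where "\<beta> a b = lim (\<lambda>k. \<alpha> (t k) a b)" for a b
      have conv: "(\<lambda>k. \<alpha> (t k) a b) \<longlonglongrightarrow> \<beta> a b" if "a < K" "b < K" for a b
        using q(2) that unfolding \<beta>_def t_def by (auto simp: convergent_LIMSEQ_iff)
      have b0: "\<beta> a b \<ge> 0" if "a < K" "b < K" for a b
        by (rule LIMSEQ_le_const[OF conv[OF that]]) (use F4 in auto)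
      have rows: "(\<Sum>b<K. \<beta> a b) = pD a" if "a < K" for a
      proof -
        have "(\<lambda>k. \<Sum>b<K. \<alpha> (t k) a b) \<longlonglongrightarrow> (\<Sum>b<K. \<beta> a b)"
          by (intro tendsto_sum conv that) auto
        moreover have "(\<lambda>k. \<Sum>b<K. \<alpha> (t k) a b) \<longlonglongrightarrow> pD a"
          using LIMSEQ_subseq_LIMSEQ[OF fy[OF that] t] unfolding F2 by (simp add: comp_def)
        ultimately show ?thesis by (rule LIMSEQ_unique)
      qed
      have cols: "(\<Sum>a<K. \<beta> a b) = pP b" if "b < K" for b
      proof -
        have "(\<lambda>k. \<Sum>a<K. \<alpha> (t k) a b) \<longlonglongrightarrow> (\<Sum>a<K. \<beta> a b)"
          by (intro tendsto_sum conv that) auto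
        moreover have "(\<lambda>k. \<Sum>a<K. \<alpha> (t k) a b) \<longlonglongrightarrow> pP b"
          using LIMSEQ_subseq_LIMSEQ[OF fx[OF that] t] unfolding F3[OF tpos(1)] by (simp add: comp_def)
        ultimately show ?thesis by (rule LIMSEQ_unique)
      qed
      have obj: "(\<Sum>a<K. \<Sum>b<K. \<beta> a b * cell_dist (C a) (C b)) \<le> r"
      proof (rule LIMSEQ_le_const2)
        show "(\<lambda>k. \<Sum>a<K. \<Sum>b<K. \<alpha> (t k) a b * cell_dist (C a) (C b)) \<longlonglongrightarrow>
                (\<Sum>a<K. \<Sum>b<K. \<beta> a b * cell_dist (C a) (C b))"
          by (intro tendsto_sum tendsto_mult_right conv) auto
        show "\<exists>N. \<forall>n\<ge>N. (\<Sum>a<K. \<Sum>b<K. \<alpha> (t n) a b * cell_dist (C a) (C b)) \<le> r"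
          using F1[OF tpos(1)] tpos(2) by (meson order_trans)
      qed
      have "L \<le> (\<Sum>a<K. \<Sum>b<K. \<beta> a b * cell_dist (C a) (C b))"
        unfolding L_def
      proof (rule cInf_lower[OF _ bdd])
        show "(\<Sum>a<K. \<Sum>b<K. \<beta> a b * cell_dist (C a) (C b)) \<in> SS"
          unfolding SS_def using b0 rows cols by blast
      qed
      with obj rL show False by linarith
    qed
  qed
  then show ?thesis unfolding L_def SS_def c_def .
qed



lemma slln_bounded:
  fixes Z :: "'i \<Rightarrow> 'm \<Rightarrow> real" and g :: "nat \<Rightarrow> 'i"
  assumes "prob_space M"
    and ind: "prob_space.indep_vars M (\<lambda>_. borel) Z UNIV"
    and inj: "inj g"
    and distr: "\<And>i. distr M borel (Z (g i)) = distr M borel (Z (g 0))"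
    and bnd: "\<And>i \<omega>. \<omega> \<in> space M \<Longrightarrow> Z (g i) \<omega> \<in> {0..1}"
  shows "AE \<omega> in M. (\<lambda>n. (\<Sum>i<n. Z (g i) \<omega>) / real n) \<longlonglongrightarrow> prob_space.expectation M (Z (g 0))"
proof -
  interpret prob_space M by fact
  define \<mu> where "\<mu> = expectation (Z (g 0))"
  have rv[measurable]: "Z k \<in> borel_measurable M" for k using ind unfolding indep_vars_def by auto
  have key: "AE \<omega> in M. eventually (\<lambda>n. \<bar>(\<Sum>i<Suc n. Z (g i) \<omega>) / real (Suc n) - \<mu>\<bar> < e) sequentially"
    if e: "e > 0" for e
  proof -
    define A where "A n = {\<omega>\<in>space M. e \<le> \<bar>(\<Sum>i\<in>g ` {..<Suc n}. Z i \<omega>) / real (card (g ` {..<Suc n})) - \<mu>\<bar>}" for n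
    define q where "q = exp (-2 * e^2)"
    have q: "0 \<le> q" "q < 1" unfolding q_def using e by auto
    have bound: "measure M (A n) \<le> 2 * q ^ Suc n" for n
    proof -
      interpret H: Hoeffding_ineq_iid M "g ` {..<Suc n}" Z "Z (g 0)" 0 1 \<mu>
      proof unfold_locales
        show "finite (g ` {..<Suc n})" by simp
        show "indep_vars (\<lambda>_. borel) Z (g ` {..<Suc n})"
          by (rule indep_vars_subset[OF ind]) auto
        show "distr M borel (Z i) = distr M borel (Z (g 0))" if "i \<in> g ` {..<Suc n}" for i
          using that distr by auto
        show "random_variable borel (Z (g 0))" by simp
        show "AE x in M. Z (g 0) x \<in> {0..1}" using bnd by auto
        show "\<mu> \<equiv> expectation (Z (g 0))" unfolding \<mu>_def by (rule reflexive)
      qed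
      have c: "card (g ` {..<Suc n}) = Suc n" using inj by (simp add: card_image inj_on_subset)
      have h: "prob {x\<in>space M. e \<le> \<bar>(\<Sum>i\<in>g ` {..<Suc n}. Z i x) / real (card (g ` {..<Suc n})) - \<mu>\<bar>}
          \<le> 2 * exp (-2 * real (card (g ` {..<Suc n})) * e^2 / (1 - 0)^2)"
        by (rule H.Hoeffding_ineq_abs_ge') (use e in auto)
      have "measure M (A n) \<le> 2 * exp (real (Suc n) * (-2 * e^2))"
      proof -
        have ex: "-2 * real (Suc n) * e^2 / (1 - 0)^2 = real (Suc n) * (-2 * e^2)" by (simp add: algebra_simps)
        show ?thesis using h unfolding A_def c ex by assumption
      qed
      also have "exp (real (Suc n) * (-2 * e^2)) = q ^ Suc n" unfolding q_def by (rule exp_of_nat_mult)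
      finally show ?thesis .
    qed
    have meas: "A n \<in> sets M" for n unfolding A_def by measurable
    have sum: "summable (\<lambda>n. measure M (A n))"
    proof (rule summable_comparison_test')
      show "summable (\<lambda>n. 2 * q ^ Suc n)"
        using summable_mult[OF summable_geometric[of q], of "2*q"] q by (simp add: mult_ac)
      show "norm (measure M (A n)) \<le> 2 * q ^ Suc n" for n using bound[of n] by simp
    qed
    have "AE \<omega> in M. eventually (\<lambda>n. \<omega> \<in> space M - A n) sequentially"
      by (rule borel_cantelli_AE1[OF meas _ sum]) (simp add: emeasure_eq_measure)
    then show ?thesis
    proof (rule eventually_mono)
      fix \<omega> assume "eventually (\<lambda>n. \<omega> \<in> space M - A n) sequentially"
      then show "eventually (\<lambda>n. \<bar>(\<Sum>i<Suc n. Z (g i) \<omega>) / real (Suc n) - \<mu>\<bar> < e) sequentially"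
      proof (rule eventually_mono)
        fix n assume "\<omega> \<in> space M - A n"
        moreover have "(\<Sum>i\<in>g ` {..<Suc n}. Z i \<omega>) = (\<Sum>i<Suc n. Z (g i) \<omega>)"
          by (subst sum.reindex) (use inj in \<open>auto intro: inj_on_subset\<close>)
        moreover have "card (g ` {..<Suc n}) = Suc n" using inj by (simp add: card_image inj_on_subset)
        ultimately show "\<bar>(\<Sum>i<Suc n. Z (g i) \<omega>) / real (Suc n) - \<mu>\<bar> < e"
          unfolding A_def by auto
      qed
    qed
  qed
  have "AE \<omega> in M. \<forall>m::nat. eventually (\<lambda>n. \<bar>(\<Sum>i<Suc n. Z (g i) \<omega>) / real (Suc n) - \<mu>\<bar> < inverse (real (Suc m))) sequentially"
    unfolding AE_all_countable by (intro allI key) simp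
  then show ?thesis
  proof (rule eventually_mono)
    fix \<omega> assume H: "\<forall>m::nat. eventually (\<lambda>n. \<bar>(\<Sum>i<Suc n. Z (g i) \<omega>) / real (Suc n) - \<mu>\<bar> < inverse (real (Suc m))) sequentially"
    show "(\<lambda>n. (\<Sum>i<n. Z (g i) \<omega>) / real n) \<longlonglongrightarrow> expectation (Z (g 0))"
      unfolding \<mu>_def[symmetric] LIMSEQ_iff
    proof (intro allI impI)
      fix r :: real assume "r > 0"
      then obtain m where m: "inverse (real (Suc m)) < r" using reals_Archimedean by blast
      from H[rule_format, of m] obtain N where
        N: "\<And>n. n \<ge> N \<Longrightarrow> \<bar>(\<Sum>i<Suc n. Z (g i) \<omega>) / real (Suc n) - \<mu>\<bar> < inverse (real (Suc m))"
        unfolding eventually_sequentially by blast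
      show "\<exists>no. \<forall>n\<ge>no. norm ((\<Sum>i<n. Z (g i) \<omega>) / real n - \<mu>) < r"
      proof (intro exI[of _ "Suc N"] allI impI)
        fix n assume "Suc N \<le> n"
        then obtain k where k: "n = Suc k" "k \<ge> N" by (cases n) auto
        show "norm ((\<Sum>i<n. Z (g i) \<omega>) / real n - \<mu>) < r"
          using N[OF k(2)] m k(1) by simp
      qed
    qed
  qed
qed

theorem lemma4:
  fixes M :: "'m measure"
    and \<Omega> :: "'a::euclidean_space set"
    and X Y :: "nat \<Rightarrow> 'm \<Rightarrow> 'a"
    and \<phi>P \<phi>D :: "'a \<Rightarrow> real"
    and K :: nat
    and C :: "nat \<Rightarrow> 'a set"
  assumes "prob_space M"
    and "DIM('a) \<ge> 2"
    and "compact \<Omega>"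
    and "\<And>x. \<phi>P x \<ge> 0" and "\<phi>P \<in> borel_measurable borel"
    and "\<And>x. \<phi>D x \<ge> 0" and "\<phi>D \<in> borel_measurable borel"
    and "\<And>i. distributed M lborel (X i) (\<lambda>x. ennreal (\<phi>P x))"
    and "\<And>i. distributed M lborel (Y i) (\<lambda>x. ennreal (\<phi>D x))"
    and "\<And>i \<omega>. \<omega> \<in> space M \<Longrightarrow> X i \<omega> \<in> \<Omega>"
    and "\<And>i \<omega>. \<omega> \<in> space M \<Longrightarrow> Y i \<omega> \<in> \<Omega>"
    and "prob_space.indep_vars M (\<lambda>_. borel)
           (\<lambda>k. case k of Inl i \<Rightarrow> X i | Inr i \<Rightarrow> Y i) (UNIV :: (nat + nat) set)"
    and "\<And>k. k < K \<Longrightarrow> C k \<in> sets borel"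
    and "\<And>k. k < K \<Longrightarrow> C k \<noteq> {}"
    and "\<And>k l. k < K \<Longrightarrow> l < K \<Longrightarrow> k \<noteq> l \<Longrightarrow> C k \<inter> C l = {}"
    and "(\<Union>k<K. C k) = \<Omega>"
  shows "AE \<omega> in M. liminf (\<lambda>n. ereal (matching_cost (\<lambda>i. X i \<omega>) (\<lambda>i. Y i \<omega>) n))
                      \<ge> ereal (lp_lower K C \<phi>P \<phi>D)"
  proof -
  note ps = assms(1)
  interpret prob_space M by (rule ps)
  define F where "F = (\<lambda>k. case k of Inl i \<Rightarrow> X i | Inr i \<Rightarrow> Y i)"
  have ind: "indep_vars (\<lambda>_. borel) F UNIV" using assms(12) unfolding F_def .
  have Xm[measurable]: "X i \<in> measurable M lborel" for i using assms(8) by (rule distributed_measurable)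
  have Ym[measurable]: "Y i \<in> measurable M lborel" for i using assms(9) by (rule distributed_measurable)
  have conv: "AE \<omega> in M. j < K \<longrightarrow>
      ((\<lambda>n. (\<Sum>i<n. indicator (C j) (X i \<omega>) :: real) / real n) \<longlonglongrightarrow> cell_mass \<phi>P (C j)) \<and>
      ((\<lambda>n. (\<Sum>i<n. indicator (C j) (Y i \<omega>) :: real) / real n) \<longlonglongrightarrow> cell_mass \<phi>D (C j))" for j
  proof (cases "j < K")
    case False then show ?thesis by simp
  next
    case True
    have Cj[measurable]: "C j \<in> sets borel" using assms(13)[OF True] .
    have im: "(indicator (C j) :: 'a \<Rightarrow> real) \<in> borel_measurable borel" by measurable
    have imL: "(indicator (C j) :: 'a \<Rightarrow> real) \<in> borel_measurable lborel" by measurable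
    define Z where "Z = (\<lambda>k \<omega>. indicator (C j) (F k \<omega>) :: real)"
    have indZ: "indep_vars (\<lambda>_. borel) Z UNIV"
      unfolding Z_def by (rule indep_vars_compose2[OF ind]) (rule im)
    have dX: "distr M borel (\<lambda>\<omega>. indicator (C j) (X i \<omega>) :: real) = distr (density lborel (\<lambda>x. ennreal (\<phi>P x))) borel (indicator (C j))" for i
    proof -
      have "distr M borel (\<lambda>\<omega>. indicator (C j) (X i \<omega>) :: real) = distr (distr M lborel (X i)) borel (indicator (C j))"
        using distr_distr[OF imL Xm[of i]] by (simp add: comp_def)
      also have "distr M lborel (X i) = density lborel (\<lambda>x. ennreal (\<phi>P x))"
        using assms(8)[of i] by (rule distributed_distr_eq_density)
      finally show ?thesis .
    qed
    have dY: "distr M borel (\<lambda>\<omega>. indicator (C j) (Y i \<omega>) :: real) = distr (density lborel (\<lambda>x. ennreal (\<phi>D x))) borel (indicator (C j))" for i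
    proof -
      have "distr M borel (\<lambda>\<omega>. indicator (C j) (Y i \<omega>) :: real) = distr (distr M lborel (Y i)) borel (indicator (C j))"
        using distr_distr[OF imL Ym[of i]] by (simp add: comp_def)
      also have "distr M lborel (Y i) = density lborel (\<lambda>x. ennreal (\<phi>D x))"
        using assms(9)[of i] by (rule distributed_distr_eq_density)
      finally show ?thesis .
    qed
    have eX: "expectation (\<lambda>\<omega>. indicator (C j) (X 0 \<omega>) :: real) = cell_mass \<phi>P (C j)"
    proof -
      have "(\<integral>x. \<phi>P x * indicator (C j) x \<partial>lborel) = expectation (\<lambda>\<omega>. indicator (C j) (X 0 \<omega>) :: real)"
        by (rule distributed_integral[OF assms(8) imL]) (use assms(4) in auto)
      then show ?thesis unfolding cell_mass_def set_lebesgue_integral_def by (simp add: mult.commute)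
    qed
    have eY: "expectation (\<lambda>\<omega>. indicator (C j) (Y 0 \<omega>) :: real) = cell_mass \<phi>D (C j)"
    proof -
      have "(\<integral>x. \<phi>D x * indicator (C j) x \<partial>lborel) = expectation (\<lambda>\<omega>. indicator (C j) (Y 0 \<omega>) :: real)"
        by (rule distributed_integral[OF assms(9) imL]) (use assms(6) in auto)
      then show ?thesis unfolding cell_mass_def set_lebesgue_integral_def by (simp add: mult.commute)
    qed
    have AX: "AE \<omega> in M. (\<lambda>n. (\<Sum>i<n. Z (Inl i) \<omega>) / real n) \<longlonglongrightarrow> expectation (Z (Inl 0))"
      by (rule slln_bounded[OF ps indZ]) (auto simp: Z_def F_def dX)
    have AY: "AE \<omega> in M. (\<lambda>n. (\<Sum>i<n. Z (Inr i) \<omega>) / real n) \<longlonglongrightarrow> expectation (Z (Inr 0))"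
      by (rule slln_bounded[OF ps indZ]) (auto simp: Z_def F_def dY)
    show ?thesis using AX AY eX eY by (auto simp: Z_def F_def)
  qed
  have "AE \<omega> in M. \<forall>j. j < K \<longrightarrow>
      ((\<lambda>n. (\<Sum>i<n. indicator (C j) (X i \<omega>) :: real) / real n) \<longlonglongrightarrow> cell_mass \<phi>P (C j)) \<and>
      ((\<lambda>n. (\<Sum>i<n. indicator (C j) (Y i \<omega>) :: real) / real n) \<longlonglongrightarrow> cell_mass \<phi>D (C j))"
    unfolding AE_all_countable using conv by blast
  moreover have "AE \<omega> in M. \<omega> \<in> space M" by (rule AE_space)
  ultimately show ?thesis
  proof (rule eventually_elim2)
    fix \<omega> assume H: "\<forall>j. j < K \<longrightarrow>
      ((\<lambda>n. (\<Sum>i<n. indicator (C j) (X i \<omega>) :: real) / real n) \<longlonglongrightarrow> cell_mass \<phi>P (C j)) \<and>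
      ((\<lambda>n. (\<Sum>i<n. indicator (C j) (Y i \<omega>) :: real) / real n) \<longlonglongrightarrow> cell_mass \<phi>D (C j))"
      and \<omega>: "\<omega> \<in> space M"
    show "ereal (lp_lower K C \<phi>P \<phi>D) \<le> liminf (\<lambda>n. ereal (matching_cost (\<lambda>i. X i \<omega>) (\<lambda>i. Y i \<omega>) n))"
      unfolding lp_lower_def
      by (rule det_main[where pP="\<lambda>j. cell_mass \<phi>P (C j)" and pD="\<lambda>j. cell_mass \<phi>D (C j)"])
         (use assms(14,15,16) assms(10,11)[OF \<omega>] H in auto)
  qed
qed

end
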